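(* Let $R$ be a commutative ring with identity, let $I,J$ be finitely generated ideals of $R$, and let $N$ be an injective $R$-module. If $M$ is an $(I,J)$-prime $R$-module, then $\operatorname{Hom}_R(M,N)$ is an $(I,J)$-coprime $R$-module.
   Context: All rings are commutative with identity and modules are unital. An $R$-module $M$ is $(I,J)$-prime if for all $m\in M$, $IJm=0$ implies $Im=0$ or $Jm=0$. It is $(I,J)$-coprime if $IJM=IM$ or $IJM=JM$. *)

theory Defs
  imports "HOL-Algebra.Module" "HOL-Algebra.Ideal_Product"
begin

definition module_hom ::
  "('r, 'x) ring_scheme \<Rightarrow> ('r, 'm, 'y) module_scheme \<Rightarrow> ('r, 'n, 'z) module_scheme \<Rightarrow> ('m \<Rightarrow> 'n) set"
  where "module_hom R M N =
    {f. f \<in> carrier M \<rightarrow> carrier N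
        \<and> (\<forall>x \<in> carrier M. \<forall>y \<in> carrier M. f (x \<oplus>\<^bsub>M\<^esub> y) = f x \<oplus>\<^bsub>N\<^esub> f y)
        \<and> (\<forall>a \<in> carrier R. \<forall>x \<in> carrier M. f (a \<odot>\<^bsub>M\<^esub> x) = a \<odot>\<^bsub>N\<^esub> f x)}"

text \<open>Hom_R(M,N) with pointwise operations; homomorphisms are taken extensional
  (undefined outside carrier M) so that equality of elements is equality of maps on M.
  The multiplicative fields are irrelevant for the module structure.\<close>
definition Hom_mod ::
  "('r, 'x) ring_scheme \<Rightarrow> ('r, 'm, 'y) module_scheme \<Rightarrow> ('r, 'n, 'z) module_scheme \<Rightarrow> ('r, 'm \<Rightarrow> 'n) module"
  where "Hom_mod R M N =
    \<lparr> carrier = {f \<in> module_hom R M N. f \<in> extensional (carrier M)},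
      mult = (\<lambda>f g. undefined),
      one = undefined,
      zero = (\<lambda>x \<in> carrier M. \<zero>\<^bsub>N\<^esub>),
      add = (\<lambda>f g. \<lambda>x \<in> carrier M. f x \<oplus>\<^bsub>N\<^esub> g x),
      smult = (\<lambda>a f. \<lambda>x \<in> carrier M. a \<odot>\<^bsub>N\<^esub> f x) \<rparr>"

definition ideal_smult ::
  "('r, 'x) ring_scheme \<Rightarrow> 'r set \<Rightarrow> ('r, 'm, 'y) module_scheme \<Rightarrow> 'm set"
  where "ideal_smult R I M =
    \<Inter>{H. submodule H R M \<and> {a \<odot>\<^bsub>M\<^esub> x | a x. a \<in> I \<and> x \<in> carrier M} \<subseteq> H}"

definition fin_gen_ideal :: "('r, 'x) ring_scheme \<Rightarrow> 'r set \<Rightarrow> bool"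
  where "fin_gen_ideal R I \<longleftrightarrow>
    ideal I R \<and> (\<exists>S. finite S \<and> S \<subseteq> carrier R \<and> I = genideal R S)"

definition IJ_prime ::
  "('r, 'x) ring_scheme \<Rightarrow> 'r set \<Rightarrow> 'r set \<Rightarrow> ('r, 'm, 'y) module_scheme \<Rightarrow> bool"
  where "IJ_prime R I J M \<longleftrightarrow>
    (\<forall>m \<in> carrier M.
       (\<forall>c \<in> ideal_prod R I J. c \<odot>\<^bsub>M\<^esub> m = \<zero>\<^bsub>M\<^esub>) \<longrightarrow>
       (\<forall>a \<in> I. a \<odot>\<^bsub>M\<^esub> m = \<zero>\<^bsub>M\<^esub>) \<or> (\<forall>b \<in> J. b \<odot>\<^bsub>M\<^esub> m = \<zero>\<^bsub>M\<^esub>))"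

definition IJ_coprime ::
  "('r, 'x) ring_scheme \<Rightarrow> 'r set \<Rightarrow> 'r set \<Rightarrow> ('r, 'm, 'y) module_scheme \<Rightarrow> bool"
  where "IJ_coprime R I J M \<longleftrightarrow>
    ideal_smult R (ideal_prod R I J) M = ideal_smult R I M \<or>
    ideal_smult R (ideal_prod R I J) M = ideal_smult R J M"

text \<open>HOL cannot quantify over all types, so injectivity is stated relative to all
  test modules whose carrier lives in a given type 'c: every homomorphism from a
  submodule A of B into N extends to B.\<close>
definition injective_wrt ::
  "'c itself \<Rightarrow> ('r, 'x) ring_scheme \<Rightarrow> ('r, 'n, 'z) module_scheme \<Rightarrow> bool"
  where "injective_wrt T R N \<longleftrightarrow> module R N \<and>
    (\<forall>(B :: ('r, 'c) module) A f.
        module R B \<and> submodule A R B \<and> f \<in> module_hom R (B\<lparr>carrier := A\<rparr>) N \<longrightarrow>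
        (\<exists>g \<in> module_hom R B N. \<forall>x \<in> A. g x = f x))"

end

theory Submission
  imports Defs
begin

lemma Hom_mod_simps:
 "carrier (Hom_mod R M N) = {f \<in> module_hom R M N. f \<in> extensional (carrier M)}"
 "\<zero>\<^bsub>Hom_mod R M N\<^esub> = (\<lambda>x\<in>carrier M. \<zero>\<^bsub>N\<^esub>)"
 "f \<oplus>\<^bsub>Hom_mod R M N\<^esub> g = (\<lambda>x\<in>carrier M. f x \<oplus>\<^bsub>N\<^esub> g x)"
 "a \<odot>\<^bsub>Hom_mod R M N\<^esub> f = (\<lambda>x\<in>carrier M. a \<odot>\<^bsub>N\<^esub> f x)"
 by (simp_all add: Hom_mod_def)

lemma HomI:
  assumes "\<And>x. x \<in> carrier M \<Longrightarrow> f x \<in> carrier N"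
    and "\<And>x y. x \<in> carrier M \<Longrightarrow> y \<in> carrier M \<Longrightarrow> f (x \<oplus>\<^bsub>M\<^esub> y) = f x \<oplus>\<^bsub>N\<^esub> f y"
    and "\<And>a x. a \<in> carrier R \<Longrightarrow> x \<in> carrier M \<Longrightarrow> f (a \<odot>\<^bsub>M\<^esub> x) = a \<odot>\<^bsub>N\<^esub> f x"
    and "f \<in> extensional (carrier M)"
  shows "f \<in> carrier (Hom_mod R M N)"
  using assms by (auto simp: Hom_mod_simps module_hom_def)

lemma HomD:
  assumes "f \<in> carrier (Hom_mod R M N)"
  shows "\<And>x. x \<in> carrier M \<Longrightarrow> f x \<in> carrier N"
    and "\<And>x y. x \<in> carrier M \<Longrightarrow> y \<in> carrier M \<Longrightarrow> f (x \<oplus>\<^bsub>M\<^esub> y) = f x \<oplus>\<^bsub>N\<^esub> f y"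
    and "\<And>a x. a \<in> carrier R \<Longrightarrow> x \<in> carrier M \<Longrightarrow> f (a \<odot>\<^bsub>M\<^esub> x) = a \<odot>\<^bsub>N\<^esub> f x"
    and "f \<in> extensional (carrier M)"
  using assms by (auto simp: Hom_mod_simps module_hom_def)

lemma Hom_eqI:
  assumes "f \<in> carrier (Hom_mod R M N)" "g \<in> carrier (Hom_mod R M N)"
    and "\<And>x. x \<in> carrier M \<Longrightarrow> f x = g x"
  shows "f = g"
  using HomD(4)[OF assms(1)] HomD(4)[OF assms(2)] assms(3) by (rule extensionalityI)

lemma Hom_module:
  assumes MM: "module R M" and NN: "module R N"
  shows "module R (Hom_mod R M N)"
proof -
  interpret M: module R M by fact
  interpret N: module R N by fact
  let ?H = "Hom_mod R M N"
  have addc: "f \<oplus>\<^bsub>?H\<^esub> g \<in> carrier ?H" if f: "f \<in> carrier ?H" and g: "g \<in> carrier ?H" for f g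
  proof (rule HomI)
    note fD = HomD[OF f] and gD = HomD[OF g]
    show "\<And>x. x \<in> carrier M \<Longrightarrow> (f \<oplus>\<^bsub>?H\<^esub> g) x \<in> carrier N"
      using fD gD by (simp add: Hom_mod_simps)
    show "(f \<oplus>\<^bsub>?H\<^esub> g) (x \<oplus>\<^bsub>M\<^esub> y) = (f \<oplus>\<^bsub>?H\<^esub> g) x \<oplus>\<^bsub>N\<^esub> (f \<oplus>\<^bsub>?H\<^esub> g) y"
      if "x \<in> carrier M" "y \<in> carrier M" for x y
      using that fD gD by (simp add: Hom_mod_simps N.a_ac)
    show "(f \<oplus>\<^bsub>?H\<^esub> g) (a \<odot>\<^bsub>M\<^esub> x) = a \<odot>\<^bsub>N\<^esub> (f \<oplus>\<^bsub>?H\<^esub> g) x"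
      if "a \<in> carrier R" "x \<in> carrier M" for a x
      using that fD gD by (simp add: Hom_mod_simps N.smult_r_distr)
    show "f \<oplus>\<^bsub>?H\<^esub> g \<in> extensional (carrier M)" by (simp add: Hom_mod_simps)
  qed
  have zc: "\<zero>\<^bsub>?H\<^esub> \<in> carrier ?H"
    by (rule HomI) (simp_all add: Hom_mod_simps)
  have smc: "a \<odot>\<^bsub>?H\<^esub> f \<in> carrier ?H" if a: "a \<in> carrier R" and f: "f \<in> carrier ?H" for a f
  proof (rule HomI)
    note fD = HomD[OF f]
    show "\<And>x. x \<in> carrier M \<Longrightarrow> (a \<odot>\<^bsub>?H\<^esub> f) x \<in> carrier N"
      using fD a by (simp add: Hom_mod_simps)
    show "(a \<odot>\<^bsub>?H\<^esub> f) (x \<oplus>\<^bsub>M\<^esub> y) = (a \<odot>\<^bsub>?H\<^esub> f) x \<oplus>\<^bsub>N\<^esub> (a \<odot>\<^bsub>?H\<^esub> f) y"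
      if "x \<in> carrier M" "y \<in> carrier M" for x y
      using that fD a by (simp add: Hom_mod_simps N.smult_r_distr)
    show "(a \<odot>\<^bsub>?H\<^esub> f) (b \<odot>\<^bsub>M\<^esub> x) = b \<odot>\<^bsub>N\<^esub> (a \<odot>\<^bsub>?H\<^esub> f) x"
      if "b \<in> carrier R" "x \<in> carrier M" for b x
      using that fD a by (simp add: Hom_mod_simps N.smult_assoc1[symmetric] M.m_comm)
    show "a \<odot>\<^bsub>?H\<^esub> f \<in> extensional (carrier M)" by (simp add: Hom_mod_simps)
  qed
  have invc: "(\<lambda>x\<in>carrier M. \<ominus>\<^bsub>N\<^esub> f x) \<in> carrier ?H" if f: "f \<in> carrier ?H" for f
  proof (rule HomI)
    note fD = HomD[OF f]
    show "\<And>x. x \<in> carrier M \<Longrightarrow> (\<lambda>x\<in>carrier M. \<ominus>\<^bsub>N\<^esub> f x) x \<in> carrier N"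
      using fD by simp
    show "(\<lambda>x\<in>carrier M. \<ominus>\<^bsub>N\<^esub> f x) (x \<oplus>\<^bsub>M\<^esub> y) = (\<lambda>x\<in>carrier M. \<ominus>\<^bsub>N\<^esub> f x) x \<oplus>\<^bsub>N\<^esub> (\<lambda>x\<in>carrier M. \<ominus>\<^bsub>N\<^esub> f x) y"
      if "x \<in> carrier M" "y \<in> carrier M" for x y
      using that fD by (simp add: N.minus_add)
    show "(\<lambda>x\<in>carrier M. \<ominus>\<^bsub>N\<^esub> f x) (b \<odot>\<^bsub>M\<^esub> x) = b \<odot>\<^bsub>N\<^esub> (\<lambda>x\<in>carrier M. \<ominus>\<^bsub>N\<^esub> f x) x"
      if "b \<in> carrier R" "x \<in> carrier M" for b x
      using that fD by (simp add: N.smult_r_minus)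
    show "(\<lambda>x\<in>carrier M. \<ominus>\<^bsub>N\<^esub> f x) \<in> extensional (carrier M)" by simp
  qed
  have addc': "(\<lambda>x\<in>carrier M. f x \<oplus>\<^bsub>N\<^esub> g x) \<in> carrier ?H" if "f \<in> carrier ?H" "g \<in> carrier ?H" for f g
    using addc[OF that] by (simp add: Hom_mod_simps(3))
  have smc': "(\<lambda>x\<in>carrier M. a \<odot>\<^bsub>N\<^esub> f x) \<in> carrier ?H" if "a \<in> carrier R" "f \<in> carrier ?H" for a f
    using smc[OF that] by (simp add: Hom_mod_simps(4))
  have fc: "\<And>x. x \<in> carrier M \<Longrightarrow> f x \<in> carrier N" if "f \<in> carrier ?H" for f
    using HomD(1)[OF that] .
  show ?thesis
  proof (rule moduleI)
    show "cring R" by (rule M.is_cring)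
    show "abelian_group ?H"
    proof (rule abelian_groupI)
      show "\<And>x y. x \<in> carrier ?H \<Longrightarrow> y \<in> carrier ?H \<Longrightarrow> x \<oplus>\<^bsub>?H\<^esub> y \<in> carrier ?H" by (rule addc)
      show "\<zero>\<^bsub>?H\<^esub> \<in> carrier ?H" by (rule zc)
      show "(x \<oplus>\<^bsub>?H\<^esub> y) \<oplus>\<^bsub>?H\<^esub> z = x \<oplus>\<^bsub>?H\<^esub> (y \<oplus>\<^bsub>?H\<^esub> z)"
        if "x \<in> carrier ?H" "y \<in> carrier ?H" "z \<in> carrier ?H" for x y z
        by (rule Hom_eqI[OF addc addc]) (use that in \<open>auto simp: Hom_mod_simps(2-4) N.a_ac fc addc' smc' intro: addc smc zc\<close>)
      show "x \<oplus>\<^bsub>?H\<^esub> y = y \<oplus>\<^bsub>?H\<^esub> x"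
        if "x \<in> carrier ?H" "y \<in> carrier ?H" for x y
        by (rule Hom_eqI[OF addc addc]) (use that in \<open>auto simp: Hom_mod_simps(2-4) N.a_ac fc addc' smc' intro: addc smc zc\<close>)
      show "\<zero>\<^bsub>?H\<^esub> \<oplus>\<^bsub>?H\<^esub> x = x" if "x \<in> carrier ?H" for x
        by (rule Hom_eqI[OF addc[OF zc] that]) (use that in \<open>auto simp: Hom_mod_simps(2-4) fc addc' smc' intro: addc smc zc invc\<close>)
      show "\<exists>y\<in>carrier ?H. y \<oplus>\<^bsub>?H\<^esub> x = \<zero>\<^bsub>?H\<^esub>" if "x \<in> carrier ?H" for x
      proof (rule bexI[OF _ invc[OF that]])
        show "(\<lambda>xa\<in>carrier M. \<ominus>\<^bsub>N\<^esub> x xa) \<oplus>\<^bsub>?H\<^esub> x = \<zero>\<^bsub>?H\<^esub>"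
          by (rule Hom_eqI[OF addc[OF invc[OF that] that] zc]) (use that in \<open>auto simp: Hom_mod_simps(2-4) N.l_neg fc addc' smc' intro: addc smc zc invc\<close>)
      qed
    qed
    show "\<And>a x. a \<in> carrier R \<Longrightarrow> x \<in> carrier ?H \<Longrightarrow> a \<odot>\<^bsub>?H\<^esub> x \<in> carrier ?H" by (rule smc)
    show "(a \<oplus>\<^bsub>R\<^esub> b) \<odot>\<^bsub>?H\<^esub> x = a \<odot>\<^bsub>?H\<^esub> x \<oplus>\<^bsub>?H\<^esub> b \<odot>\<^bsub>?H\<^esub> x"
      if "a \<in> carrier R" "b \<in> carrier R" "x \<in> carrier ?H" for a b x
      by (rule Hom_eqI[OF smc addc[OF smc smc]]) (use that in \<open>auto simp: Hom_mod_simps(2-4) N.smult_l_distr fc addc' smc' intro: addc smc zc\<close>)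
    show "a \<odot>\<^bsub>?H\<^esub> (x \<oplus>\<^bsub>?H\<^esub> y) = a \<odot>\<^bsub>?H\<^esub> x \<oplus>\<^bsub>?H\<^esub> a \<odot>\<^bsub>?H\<^esub> y"
      if "a \<in> carrier R" "x \<in> carrier ?H" "y \<in> carrier ?H" for a x y
      by (rule Hom_eqI[OF smc[OF _ addc] addc[OF smc smc]]) (use that in \<open>auto simp: Hom_mod_simps(2-4) N.smult_r_distr fc addc' smc' intro: addc smc zc\<close>)
    show "(a \<otimes>\<^bsub>R\<^esub> b) \<odot>\<^bsub>?H\<^esub> x = a \<odot>\<^bsub>?H\<^esub> (b \<odot>\<^bsub>?H\<^esub> x)"
      if "a \<in> carrier R" "b \<in> carrier R" "x \<in> carrier ?H" for a b x
      by (rule Hom_eqI[OF smc smc[OF _ smc]]) (use that in \<open>auto simp: Hom_mod_simps(2-4) N.smult_assoc1 fc addc' smc' intro: addc smc zc\<close>)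
    show "\<one>\<^bsub>R\<^esub> \<odot>\<^bsub>?H\<^esub> x = x" if "x \<in> carrier ?H" for x
      by (rule Hom_eqI[OF smc that]) (use that in \<open>auto simp: Hom_mod_simps(2-4) fc addc' smc' intro: addc smc zc invc\<close>)
  qed
qed


lemma ideal_smult_mono: "I \<subseteq> I' \<Longrightarrow> ideal_smult R I M \<subseteq> ideal_smult R I' M"
  unfolding ideal_smult_def by blast

lemma ideal_smult_least:
  "submodule V R M \<Longrightarrow> (\<And>a x. a \<in> I \<Longrightarrow> x \<in> carrier M \<Longrightarrow> a \<odot>\<^bsub>M\<^esub> x \<in> V) \<Longrightarrow> ideal_smult R I M \<subseteq> V"
  unfolding ideal_smult_def by blast

lemma ideal_smult_gen: "a \<in> I \<Longrightarrow> x \<in> carrier M \<Longrightarrow> a \<odot>\<^bsub>M\<^esub> x \<in> ideal_smult R I M"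
  unfolding ideal_smult_def by blast

lemma ideal_smult_zero: "\<zero>\<^bsub>M\<^esub> \<in> ideal_smult R I M"
  unfolding ideal_smult_def
proof (intro InterI, clarify)
  fix H assume "submodule H R M"
  then have "subgroup H (add_monoid M)" by (rule submodule.axioms(1))
  then have "\<one>\<^bsub>add_monoid M\<^esub> \<in> H" by (rule subgroup.one_closed)
  then show "\<zero>\<^bsub>M\<^esub> \<in> H" by simp
qed

lemma ideal_smult_add: "x \<in> ideal_smult R I M \<Longrightarrow> y \<in> ideal_smult R I M \<Longrightarrow> x \<oplus>\<^bsub>M\<^esub> y \<in> ideal_smult R I M"
  unfolding ideal_smult_def
proof (intro InterI, clarify)
  fix H assume x: "x \<in> \<Inter> {H. submodule H R M \<and> {a \<odot>\<^bsub>M\<^esub> x |a x. a \<in> I \<and> x \<in> carrier M} \<subseteq> H}"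
    and y: "y \<in> \<Inter> {H. submodule H R M \<and> {a \<odot>\<^bsub>M\<^esub> x |a x. a \<in> I \<and> x \<in> carrier M} \<subseteq> H}"
    and H: "submodule H R M" "{a \<odot>\<^bsub>M\<^esub> x |a x. a \<in> I \<and> x \<in> carrier M} \<subseteq> H"
  have "x \<in> H" "y \<in> H" using x y H by blast+
  moreover have "subgroup H (add_monoid M)" using H(1) by (rule submodule.axioms(1))
  ultimately have "x \<otimes>\<^bsub>add_monoid M\<^esub> y \<in> H" by (rule subgroup.m_closed[rotated 1])
  then show "x \<oplus>\<^bsub>M\<^esub> y \<in> H" by simp
qed

lemma hom_zero:
  assumes "module R M" "module R N" "f \<in> module_hom R M N"
  shows "f \<zero>\<^bsub>M\<^esub> = \<zero>\<^bsub>N\<^esub>"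
proof -
  interpret M: module R M by fact
  interpret N: module R N by fact
  have "f (\<zero>\<^bsub>R\<^esub> \<odot>\<^bsub>M\<^esub> \<zero>\<^bsub>M\<^esub>) = \<zero>\<^bsub>R\<^esub> \<odot>\<^bsub>N\<^esub> f \<zero>\<^bsub>M\<^esub>"
    using assms(3) M.zero_closed M.R.zero_closed unfolding module_hom_def by blast
  then have "f \<zero>\<^bsub>M\<^esub> = \<zero>\<^bsub>R\<^esub> \<odot>\<^bsub>N\<^esub> f \<zero>\<^bsub>M\<^esub>" by simp
  moreover have "f \<zero>\<^bsub>M\<^esub> \<in> carrier N" using assms(3) M.zero_closed unfolding module_hom_def by blast
  ultimately show ?thesis by simp
qed

lemma ideal_smult_upper:
  assumes MM: "module R M" and NN: "module R N" and IR: "I \<subseteq> carrier R"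
    and f: "f \<in> ideal_smult R I (Hom_mod R M N)"
  shows "f \<in> carrier (Hom_mod R M N) \<and> (\<forall>m\<in>carrier M. (\<forall>a\<in>I. a \<odot>\<^bsub>M\<^esub> m = \<zero>\<^bsub>M\<^esub>) \<longrightarrow> f m = \<zero>\<^bsub>N\<^esub>)"
proof -
  interpret M: module R M by fact
  interpret N: module R N by fact
  let ?H = "Hom_mod R M N"
  interpret H: module R ?H by (rule Hom_module[OF MM NN])
  let ?V = "{f \<in> carrier ?H. \<forall>m\<in>carrier M. (\<forall>a\<in>I. a \<odot>\<^bsub>M\<^esub> m = \<zero>\<^bsub>M\<^esub>) \<longrightarrow> f m = \<zero>\<^bsub>N\<^esub>}"
  have smV: "a \<odot>\<^bsub>?H\<^esub> g \<in> ?V" if "a \<in> carrier R" "g \<in> ?V" for a g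
  proof -
    have "a \<odot>\<^bsub>?H\<^esub> g \<in> carrier ?H" using that by (intro H.smult_closed) auto
    then show ?thesis using that by (auto simp: Hom_mod_simps(4))
  qed
  have "submodule ?V R ?H"
  proof (rule H.submoduleI)
    show "?V \<subseteq> carrier ?H" by blast
    show "\<zero>\<^bsub>?H\<^esub> \<in> ?V" using H.zero_closed by (auto simp: Hom_mod_simps(2))
    show "a \<oplus>\<^bsub>?H\<^esub> b \<in> ?V" if "a \<in> ?V" "b \<in> ?V" for a b
    proof -
      have "a \<oplus>\<^bsub>?H\<^esub> b \<in> carrier ?H" using that by (intro H.add.m_closed) auto
      then show ?thesis using that by (auto simp: Hom_mod_simps(3))
    qed
    show "a \<odot>\<^bsub>?H\<^esub> x \<in> ?V" if "a \<in> carrier R" "x \<in> ?V" for a x by (rule smV[OF that])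
    show "\<ominus>\<^bsub>?H\<^esub> a \<in> ?V" if "a \<in> ?V" for a
    proof -
      have ac: "a \<in> carrier ?H" using that by blast
      have "\<ominus>\<^bsub>?H\<^esub> a = \<ominus>\<^bsub>?H\<^esub> (\<one>\<^bsub>R\<^esub> \<odot>\<^bsub>?H\<^esub> a)" using ac by simp
      also have "\<dots> = (\<ominus>\<^bsub>R\<^esub> \<one>\<^bsub>R\<^esub>) \<odot>\<^bsub>?H\<^esub> a" using ac by (simp add: H.smult_l_minus)
      finally show ?thesis using smV[OF _ that] by simp
    qed
  qed
  moreover have "a \<odot>\<^bsub>?H\<^esub> g \<in> ?V" if "a \<in> I" "g \<in> carrier ?H" for a g
  proof -
    have a: "a \<in> carrier R" using that IR by blast
    have "g (a \<odot>\<^bsub>M\<^esub> m) = a \<odot>\<^bsub>N\<^esub> g m" if "m \<in> carrier M" for m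
      using HomD(3)[OF \<open>g \<in> carrier ?H\<close> a that] .
    moreover have "g \<zero>\<^bsub>M\<^esub> = \<zero>\<^bsub>N\<^esub>"
      using hom_zero[OF MM NN] \<open>g \<in> carrier ?H\<close> by (simp add: Hom_mod_simps(1))
    ultimately have "\<forall>m\<in>carrier M. (\<forall>a\<in>I. a \<odot>\<^bsub>M\<^esub> m = \<zero>\<^bsub>M\<^esub>) \<longrightarrow> (a \<odot>\<^bsub>?H\<^esub> g) m = \<zero>\<^bsub>N\<^esub>"
    proof (intro ballI impI)
      fix m assume m: "m \<in> carrier M" and ann: "\<forall>a\<in>I. a \<odot>\<^bsub>M\<^esub> m = \<zero>\<^bsub>M\<^esub>"
      have "(a \<odot>\<^bsub>?H\<^esub> g) m = a \<odot>\<^bsub>N\<^esub> g m" using m by (simp add: Hom_mod_simps(4))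
      also have "\<dots> = g (a \<odot>\<^bsub>M\<^esub> m)" using calculation(1) m by (metis \<open>\<And>m. m \<in> carrier M \<Longrightarrow> g (a \<odot>\<^bsub>M\<^esub> m) = a \<odot>\<^bsub>N\<^esub> g m\<close>)
      also have "\<dots> = \<zero>\<^bsub>N\<^esub>" using ann \<open>a \<in> I\<close> \<open>g \<zero>\<^bsub>M\<^esub> = \<zero>\<^bsub>N\<^esub>\<close> by simp
      finally show "(a \<odot>\<^bsub>?H\<^esub> g) m = \<zero>\<^bsub>N\<^esub>" .
    qed
    then show ?thesis using H.smult_closed[OF a \<open>g \<in> carrier ?H\<close>] by blast
  qed
  ultimately have "ideal_smult R I ?H \<subseteq> ?V" by (rule ideal_smult_least)
  then show ?thesis using f by blast
qed

lemma ann_ideal: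
  assumes MM: "module R M" and m: "m \<in> carrier M"
  shows "ideal {r \<in> carrier R. r \<odot>\<^bsub>M\<^esub> m = \<zero>\<^bsub>M\<^esub>} R"
proof -
  interpret R: cring R using MM by (rule module.axioms(1))
  interpret M: module R M by fact
  show ?thesis
  proof (rule idealI[OF R.ring_axioms])
    show "subgroup {r \<in> carrier R. r \<odot>\<^bsub>M\<^esub> m = \<zero>\<^bsub>M\<^esub>} (add_monoid R)"
    proof (rule R.add.subgroupI)
      show "{r \<in> carrier R. r \<odot>\<^bsub>M\<^esub> m = \<zero>\<^bsub>M\<^esub>} \<subseteq> carrier R" by auto
      show "{r \<in> carrier R. r \<odot>\<^bsub>M\<^esub> m = \<zero>\<^bsub>M\<^esub>} \<noteq> {}" using m by (auto intro!: exI[of _ "\<zero>\<^bsub>R\<^esub>"])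
      show "\<ominus>\<^bsub>R\<^esub> a \<in> {r \<in> carrier R. r \<odot>\<^bsub>M\<^esub> m = \<zero>\<^bsub>M\<^esub>}"
        if "a \<in> {r \<in> carrier R. r \<odot>\<^bsub>M\<^esub> m = \<zero>\<^bsub>M\<^esub>}" for a
        using that m by (simp add: M.smult_l_minus)
      show "a \<oplus>\<^bsub>R\<^esub> b \<in> {r \<in> carrier R. r \<odot>\<^bsub>M\<^esub> m = \<zero>\<^bsub>M\<^esub>}"
        if "a \<in> {r \<in> carrier R. r \<odot>\<^bsub>M\<^esub> m = \<zero>\<^bsub>M\<^esub>}" "b \<in> {r \<in> carrier R. r \<odot>\<^bsub>M\<^esub> m = \<zero>\<^bsub>M\<^esub>}" for a b
        using that m by (simp add: M.smult_l_distr)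
    qed
    show "x \<otimes>\<^bsub>R\<^esub> a \<in> {r \<in> carrier R. r \<odot>\<^bsub>M\<^esub> m = \<zero>\<^bsub>M\<^esub>}"
      if "a \<in> {r \<in> carrier R. r \<odot>\<^bsub>M\<^esub> m = \<zero>\<^bsub>M\<^esub>}" "x \<in> carrier R" for a x
      using that m by (simp add: M.smult_assoc1)
    show "a \<otimes>\<^bsub>R\<^esub> x \<in> {r \<in> carrier R. r \<odot>\<^bsub>M\<^esub> m = \<zero>\<^bsub>M\<^esub>}"
      if "a \<in> {r \<in> carrier R. r \<odot>\<^bsub>M\<^esub> m = \<zero>\<^bsub>M\<^esub>}" "x \<in> carrier R" for a x
      using that m by (simp add: M.smult_assoc1 R.m_comm[of a x])
  qed
qed


definition pow_mod :: "('r, 'm) module \<Rightarrow> ('r, 'r + (nat \<Rightarrow> 'm)) module" where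
  "pow_mod M = \<lparr>carrier = Inr ` {v. \<forall>i. v i \<in> carrier M}, mult = (\<lambda>x y. undefined), one = undefined,
     zero = Inr (\<lambda>i. \<zero>\<^bsub>M\<^esub>), add = (\<lambda>x y. Inr (\<lambda>i. projr x i \<oplus>\<^bsub>M\<^esub> projr y i)),
     smult = (\<lambda>a x. Inr (\<lambda>i. a \<odot>\<^bsub>M\<^esub> projr x i))\<rparr>"

lemma pow_mod_simps:
  "x \<in> carrier (pow_mod M) \<longleftrightarrow> (\<exists>v. x = Inr v \<and> (\<forall>i. v i \<in> carrier M))"
  "\<zero>\<^bsub>pow_mod M\<^esub> = Inr (\<lambda>i. \<zero>\<^bsub>M\<^esub>)"
  "Inr v \<oplus>\<^bsub>pow_mod M\<^esub> Inr w = Inr (\<lambda>i. v i \<oplus>\<^bsub>M\<^esub> w i)"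
  "a \<odot>\<^bsub>pow_mod M\<^esub> Inr v = Inr (\<lambda>i. a \<odot>\<^bsub>M\<^esub> v i)"
  by (auto simp: pow_mod_def)

lemma pow_mod_module:
  assumes MM: "module R M"
  shows "module R (pow_mod M)"
proof -
  interpret M: module R M by fact
  show ?thesis
  proof (rule moduleI)
    show "cring R" by (rule M.is_cring)
    show "abelian_group (pow_mod M)"
    proof (rule abelian_groupI)
      show "x \<oplus>\<^bsub>pow_mod M\<^esub> y \<in> carrier (pow_mod M)" if "x \<in> carrier (pow_mod M)" "y \<in> carrier (pow_mod M)" for x y
        using that by (auto simp: pow_mod_simps)
      show "\<zero>\<^bsub>pow_mod M\<^esub> \<in> carrier (pow_mod M)" by (auto simp: pow_mod_simps)
      show "x \<oplus>\<^bsub>pow_mod M\<^esub> y \<oplus>\<^bsub>pow_mod M\<^esub> z = x \<oplus>\<^bsub>pow_mod M\<^esub> (y \<oplus>\<^bsub>pow_mod M\<^esub> z)"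
        if "x \<in> carrier (pow_mod M)" "y \<in> carrier (pow_mod M)" "z \<in> carrier (pow_mod M)" for x y z
        using that by (auto simp: pow_mod_simps M.a_ac)
      show "x \<oplus>\<^bsub>pow_mod M\<^esub> y = y \<oplus>\<^bsub>pow_mod M\<^esub> x"
        if "x \<in> carrier (pow_mod M)" "y \<in> carrier (pow_mod M)" for x y
        using that by (auto simp: pow_mod_simps M.a_ac)
      show "\<zero>\<^bsub>pow_mod M\<^esub> \<oplus>\<^bsub>pow_mod M\<^esub> x = x" if "x \<in> carrier (pow_mod M)" for x
        using that by (auto simp: pow_mod_simps)
      show "\<exists>y\<in>carrier (pow_mod M). y \<oplus>\<^bsub>pow_mod M\<^esub> x = \<zero>\<^bsub>pow_mod M\<^esub>" if xB: "x \<in> carrier (pow_mod M)" for x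
      proof -
        obtain v where v: "x = Inr v" "\<forall>i. v i \<in> carrier M" using xB unfolding pow_mod_simps by blast
        show ?thesis
          by (rule bexI[of _ "Inr (\<lambda>i. \<ominus>\<^bsub>M\<^esub> v i)"]) (use v in \<open>auto simp: pow_mod_simps M.l_neg\<close>)
      qed
    qed
    show "a \<odot>\<^bsub>pow_mod M\<^esub> x \<in> carrier (pow_mod M)" if "a \<in> carrier R" "x \<in> carrier (pow_mod M)" for a x
      using that by (auto simp: pow_mod_simps)
    show "(a \<oplus>\<^bsub>R\<^esub> b) \<odot>\<^bsub>pow_mod M\<^esub> x = a \<odot>\<^bsub>pow_mod M\<^esub> x \<oplus>\<^bsub>pow_mod M\<^esub> b \<odot>\<^bsub>pow_mod M\<^esub> x"
      if "a \<in> carrier R" "b \<in> carrier R" "x \<in> carrier (pow_mod M)" for a b x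
      using that by (auto simp: pow_mod_simps M.smult_l_distr)
    show "a \<odot>\<^bsub>pow_mod M\<^esub> (x \<oplus>\<^bsub>pow_mod M\<^esub> y) = a \<odot>\<^bsub>pow_mod M\<^esub> x \<oplus>\<^bsub>pow_mod M\<^esub> a \<odot>\<^bsub>pow_mod M\<^esub> y"
      if "a \<in> carrier R" "x \<in> carrier (pow_mod M)" "y \<in> carrier (pow_mod M)" for a x y
      using that by (auto simp: pow_mod_simps M.smult_r_distr)
    show "(a \<otimes>\<^bsub>R\<^esub> b) \<odot>\<^bsub>pow_mod M\<^esub> x = a \<odot>\<^bsub>pow_mod M\<^esub> (b \<odot>\<^bsub>pow_mod M\<^esub> x)"
      if "a \<in> carrier R" "b \<in> carrier R" "x \<in> carrier (pow_mod M)" for a b x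
      using that by (auto simp: pow_mod_simps M.smult_assoc1)
    show "\<one>\<^bsub>R\<^esub> \<odot>\<^bsub>pow_mod M\<^esub> x = x" if "x \<in> carrier (pow_mod M)" for x
      using that by (auto simp: pow_mod_simps)
  qed
qed

primrec rsum :: "('a, 'b) ring_scheme \<Rightarrow> (nat \<Rightarrow> 'a) \<Rightarrow> nat \<Rightarrow> 'a" where
  "rsum N h 0 = \<zero>\<^bsub>N\<^esub>"
| "rsum N h (Suc k) = rsum N h k \<oplus>\<^bsub>N\<^esub> h k"

lemma rsum_cong: "(\<And>i. i < k \<Longrightarrow> h i = h' i) \<Longrightarrow> rsum N h k = rsum N h' k"
  by (induction k) auto

lemma key_lemma:
  fixes R :: "'r ring" and M :: "('r, 'm) module" and N :: "('r, 'n) module" and n :: nat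
  assumes MM: "module R M" and inj: "injective_wrt TYPE('r + (nat \<Rightarrow> 'm)) R N"
    and cs: "\<forall>i<n. cs i \<in> I" and IR: "I \<subseteq> carrier R"
    and f: "f \<in> carrier (Hom_mod R M N)"
    and van: "\<forall>m\<in>carrier M. (\<forall>i<n. cs i \<odot>\<^bsub>M\<^esub> m = \<zero>\<^bsub>M\<^esub>) \<longrightarrow> f m = \<zero>\<^bsub>N\<^esub>"
  shows "f \<in> ideal_smult R I (Hom_mod R M N)"
proof -
  have NN: "module R N" using inj unfolding injective_wrt_def by blast
  interpret M: module R M by fact
  interpret N: module R N by fact
  let ?H = "Hom_mod R M N"
  interpret H: module R ?H by (rule Hom_module[OF MM NN])
  let ?B = "pow_mod M"
  interpret B: module R ?B by (rule pow_mod_module[OF MM])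
  have csR: "cs i \<in> carrier R" if "i < n" for i using cs IR that by blast
  note fD = HomD[OF f]
  define tr where "tr k v = (Inr (\<lambda>j. if j < k then v j else \<zero>\<^bsub>M\<^esub>) :: 'r + (nat \<Rightarrow> 'm))" for k v
  define w where "w m = (\<lambda>j. if j < n then cs j \<odot>\<^bsub>M\<^esub> m else \<zero>\<^bsub>M\<^esub>)" for m
  define phi where "phi m = tr n (w m)" for m
  define e where "e i m = (Inr (\<lambda>j. if j = i then m else \<zero>\<^bsub>M\<^esub>) :: 'r + (nat \<Rightarrow> 'm))" for i m
  have wM: "w m j \<in> carrier M" if "m \<in> carrier M" for m j
    using that csR by (simp add: w_def)
  have phi_eq: "phi m = Inr (w m)" for m
    by (auto simp: phi_def tr_def w_def)
  have phiB: "phi m \<in> carrier ?B" if "m \<in> carrier M" for m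
    using wM[OF that] by (auto simp: phi_eq pow_mod_simps)
  have phi_add: "phi (m \<oplus>\<^bsub>M\<^esub> m') = phi m \<oplus>\<^bsub>?B\<^esub> phi m'" if "m \<in> carrier M" "m' \<in> carrier M" for m m'
    using that csR by (auto simp: phi_eq pow_mod_simps w_def M.smult_r_distr)
  have phi_smult: "phi (a \<odot>\<^bsub>M\<^esub> m) = a \<odot>\<^bsub>?B\<^esub> phi m" if "a \<in> carrier R" "m \<in> carrier M" for a m
    using that csR by (auto simp: phi_eq pow_mod_simps w_def M.smult_assoc1[symmetric] M.m_comm)
  have phi_zero: "phi \<zero>\<^bsub>M\<^esub> = \<zero>\<^bsub>?B\<^esub>"
    using csR by (auto simp: phi_eq pow_mod_simps w_def)
  let ?A = "phi ` carrier M"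
  have subA: "submodule ?A R ?B"
  proof (rule B.submoduleI)
    show "?A \<subseteq> carrier ?B" using phiB by blast
    show "\<zero>\<^bsub>?B\<^esub> \<in> ?A" using phi_zero[symmetric] by blast
    show "a \<oplus>\<^bsub>?B\<^esub> b \<in> ?A" if ab: "a \<in> ?A" "b \<in> ?A" for a b
    proof -
      obtain x y where "x \<in> carrier M" "y \<in> carrier M" "a = phi x" "b = phi y" using ab by blast
      then have "a \<oplus>\<^bsub>?B\<^esub> b = phi (x \<oplus>\<^bsub>M\<^esub> y)" using phi_add by simp
      then show ?thesis using \<open>x \<in> carrier M\<close> \<open>y \<in> carrier M\<close> by auto
    qed
    show "a \<odot>\<^bsub>?B\<^esub> x \<in> ?A" if ax: "a \<in> carrier R" "x \<in> ?A" for a x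
    proof -
      obtain y where "y \<in> carrier M" "x = phi y" using ax by blast
      then have "a \<odot>\<^bsub>?B\<^esub> x = phi (a \<odot>\<^bsub>M\<^esub> y)" using phi_smult ax(1) by simp
      then show ?thesis using \<open>y \<in> carrier M\<close> ax(1) by auto
    qed
    show "\<ominus>\<^bsub>?B\<^esub> x \<in> ?A" if xA: "x \<in> ?A" for x
    proof -
      obtain m where m: "m \<in> carrier M" "x = phi m" using xA by blast
      have "\<ominus>\<^bsub>?B\<^esub> x = \<ominus>\<^bsub>?B\<^esub> (\<one>\<^bsub>R\<^esub> \<odot>\<^bsub>?B\<^esub> x)" using phiB[OF m(1)] m(2) by simp
      also have "\<dots> = (\<ominus>\<^bsub>R\<^esub> \<one>\<^bsub>R\<^esub>) \<odot>\<^bsub>?B\<^esub> x" using phiB[OF m(1)] m(2) by (simp add: B.smult_l_minus)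
      also have "\<dots> = phi ((\<ominus>\<^bsub>R\<^esub> \<one>\<^bsub>R\<^esub>) \<odot>\<^bsub>M\<^esub> m)" using m by (simp add: phi_smult)
      finally show ?thesis using m by auto
    qed
  qed
  define f0 where "f0 x = f (SOME m. m \<in> carrier M \<and> phi m = x)" for x
  have f0phi: "f0 (phi m) = f m" if m: "m \<in> carrier M" for m
  proof -
    define s where "s = (SOME s. s \<in> carrier M \<and> phi s = phi m)"
    have s: "s \<in> carrier M \<and> phi s = phi m" unfolding s_def by (rule someI[of _ m]) (use m in simp)
    have eqs: "cs i \<odot>\<^bsub>M\<^esub> s = cs i \<odot>\<^bsub>M\<^esub> m" if "i < n" for i
    proof -
      from s have "w s = w m" by (simp add: phi_eq)
      then have "w s i = w m i" by simp
      then show ?thesis using that by (simp add: w_def)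
    qed
    define d where "d = s \<oplus>\<^bsub>M\<^esub> \<ominus>\<^bsub>M\<^esub> m"
    have dM: "d \<in> carrier M" using s m by (simp add: d_def)
    have "cs i \<odot>\<^bsub>M\<^esub> d = \<zero>\<^bsub>M\<^esub>" if "i < n" for i
      using s m csR[OF that] eqs[OF that] by (simp add: d_def M.smult_r_distr M.smult_r_minus M.r_neg)
    then have fd: "f d = \<zero>\<^bsub>N\<^esub>" using van dM by blast
    have sd: "s = d \<oplus>\<^bsub>M\<^esub> m" using s m by (simp add: d_def M.a_assoc M.l_neg)
    have "f s = f d \<oplus>\<^bsub>N\<^esub> f m" using sd fD(2)[OF dM m] by simp
    also have "\<dots> = f m" using fd fD(1)[OF m] by simp
    finally show ?thesis unfolding f0_def s_def[symmetric] .
  qed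
  have f0hom: "f0 \<in> module_hom R (?B\<lparr>carrier := ?A\<rparr>) N"
    unfolding module_hom_def
  proof (intro CollectI conjI ballI)
    show "f0 \<in> carrier (?B\<lparr>carrier := ?A\<rparr>) \<rightarrow> carrier N"
      using f0phi fD(1) by auto
    show "f0 (x \<oplus>\<^bsub>?B\<lparr>carrier := ?A\<rparr>\<^esub> y) = f0 x \<oplus>\<^bsub>N\<^esub> f0 y"
      if "x \<in> carrier (?B\<lparr>carrier := ?A\<rparr>)" "y \<in> carrier (?B\<lparr>carrier := ?A\<rparr>)" for x y
      using that by (auto simp: phi_add[symmetric] f0phi fD(2))
    show "f0 (a \<odot>\<^bsub>?B\<lparr>carrier := ?A\<rparr>\<^esub> x) = a \<odot>\<^bsub>N\<^esub> f0 x"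
      if "a \<in> carrier R" "x \<in> carrier (?B\<lparr>carrier := ?A\<rparr>)" for a x
      using that by (auto simp: phi_smult[symmetric] f0phi fD(3))
  qed
  obtain g where g: "g \<in> module_hom R ?B N" and gA: "\<forall>x\<in>?A. g x = f0 x"
    using inj subA f0hom B.module_axioms unfolding injective_wrt_def by blast
  have gB: "g x \<in> carrier N" if "x \<in> carrier ?B" for x using g that unfolding module_hom_def by blast
  have g_add: "g (x \<oplus>\<^bsub>?B\<^esub> y) = g x \<oplus>\<^bsub>N\<^esub> g y" if "x \<in> carrier ?B" "y \<in> carrier ?B" for x y
    using g that unfolding module_hom_def by blast
  have g_smult: "g (a \<odot>\<^bsub>?B\<^esub> x) = a \<odot>\<^bsub>N\<^esub> g x" if "a \<in> carrier R" "x \<in> carrier ?B" for a x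
    using g that unfolding module_hom_def by blast
  have g_zero: "g \<zero>\<^bsub>?B\<^esub> = \<zero>\<^bsub>N\<^esub>" by (rule hom_zero[OF B.module_axioms NN g])
  have gphi: "g (phi m) = f m" if "m \<in> carrier M" for m using gA f0phi that by auto
  define gi where "gi i = (\<lambda>m\<in>carrier M. g (e i m))" for i
  have eB: "e i m \<in> carrier ?B" if "m \<in> carrier M" for i m
    using that by (auto simp: e_def pow_mod_simps)
  have e_add: "e i (m \<oplus>\<^bsub>M\<^esub> m') = e i m \<oplus>\<^bsub>?B\<^esub> e i m'" if "m \<in> carrier M" "m' \<in> carrier M" for i m m'
    using that by (auto simp: e_def pow_mod_simps)
  have e_smult: "e i (a \<odot>\<^bsub>M\<^esub> m) = a \<odot>\<^bsub>?B\<^esub> e i m" if "a \<in> carrier R" "m \<in> carrier M" for i a m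
    using that by (auto simp: e_def pow_mod_simps)
  have giH: "gi i \<in> carrier ?H" for i
  proof (rule HomI)
    show "gi i x \<in> carrier N" if "x \<in> carrier M" for x using that eB gB by (simp add: gi_def)
    show "gi i (x \<oplus>\<^bsub>M\<^esub> y) = gi i x \<oplus>\<^bsub>N\<^esub> gi i y" if "x \<in> carrier M" "y \<in> carrier M" for x y
      using that by (simp add: gi_def e_add g_add eB)
    show "gi i (a \<odot>\<^bsub>M\<^esub> x) = a \<odot>\<^bsub>N\<^esub> gi i x" if "a \<in> carrier R" "x \<in> carrier M" for a x
      using that by (simp add: gi_def e_smult g_smult eB)
    show "gi i \<in> extensional (carrier M)" by (simp add: gi_def)
  qed
  have trB: "tr k v \<in> carrier ?B" if "\<forall>j. v j \<in> carrier M" for k v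
    using that by (auto simp: tr_def pow_mod_simps)
  have tr_suc: "tr (Suc k) v = tr k v \<oplus>\<^bsub>?B\<^esub> e k (v k)" if "\<forall>j. v j \<in> carrier M" for k v
    using that by (auto simp: tr_def e_def pow_mod_simps)
  have gtr: "g (tr k v) = rsum N (\<lambda>i. g (e i (v i))) k" if v: "\<forall>j. v j \<in> carrier M" for k v
  proof (induction k)
    case 0
    have "tr 0 v = \<zero>\<^bsub>?B\<^esub>" by (simp add: tr_def pow_mod_simps)
    then show ?case using g_zero by simp
  next
    case (Suc k)
    show ?case using Suc v by (simp add: tr_suc g_add trB eB)
  qed
  define F where "F k = rsum ?H (\<lambda>i. cs i \<odot>\<^bsub>?H\<^esub> gi i) k" for k
  have FH: "F k \<in> carrier ?H \<and> F k \<in> ideal_smult R I ?H \<and>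
      (\<forall>m\<in>carrier M. F k m = rsum N (\<lambda>i. cs i \<odot>\<^bsub>N\<^esub> gi i m) k)" if "k \<le> n" for k
    using that
  proof (induction k)
    case 0
    have F0: "F 0 = \<zero>\<^bsub>?H\<^esub>" by (simp add: F_def)
    show ?case unfolding F0 using H.zero_closed ideal_smult_zero[of ?H R I]
      by (simp only: simp_thms) (simp add: Hom_mod_simps(2))
  next
    case (Suc k)
    then have IH: "F k \<in> carrier ?H" "F k \<in> ideal_smult R I ?H"
       "\<forall>m\<in>carrier M. F k m = rsum N (\<lambda>i. cs i \<odot>\<^bsub>N\<^esub> gi i m) k" and kn: "k < n" by auto
    have FS: "F (Suc k) = F k \<oplus>\<^bsub>?H\<^esub> (cs k \<odot>\<^bsub>?H\<^esub> gi k)" by (simp add: F_def)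
    have t: "cs k \<odot>\<^bsub>?H\<^esub> gi k \<in> carrier ?H" using csR[OF kn] giH by simp
    have "F (Suc k) \<in> carrier ?H" using FS IH(1) t by simp
    moreover have "F (Suc k) \<in> ideal_smult R I ?H"
      unfolding FS by (rule ideal_smult_add[OF IH(2) ideal_smult_gen]) (use cs kn giH in auto)
    moreover have "\<forall>m\<in>carrier M. F (Suc k) m = rsum N (\<lambda>i. cs i \<odot>\<^bsub>N\<^esub> gi i m) (Suc k)"
      using IH(3) by (simp add: FS Hom_mod_simps(3,4))
    ultimately show ?case by blast
  qed
  have "f = F n"
  proof (rule Hom_eqI[OF f])
    show "F n \<in> carrier ?H" using FH by blast
    fix m assume m: "m \<in> carrier M"
    have "f m = g (tr n (w m))" using gphi[OF m] by (simp add: phi_def)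
    also have "\<dots> = rsum N (\<lambda>i. g (e i (w m i))) n" using gtr wM[OF m] by blast
    also have "\<dots> = rsum N (\<lambda>i. cs i \<odot>\<^bsub>N\<^esub> gi i m) n"
    proof (rule rsum_cong)
      fix i assume i: "i < n"
      have "g (e i (w m i)) = g (e i (cs i \<odot>\<^bsub>M\<^esub> m))" using i by (simp add: w_def)
      also have "\<dots> = cs i \<odot>\<^bsub>N\<^esub> g (e i m)" using csR[OF i] m by (simp add: e_smult g_smult eB)
      finally show "g (e i (w m i)) = cs i \<odot>\<^bsub>N\<^esub> gi i m" using m by (simp add: gi_def)
    qed
    also have "\<dots> = F n m" using FH m by auto
    finally show "f m = F n m" .
  qed
  then show ?thesis using FH by blast
qed

theorem mainTheorem5:
  fixes R :: "'r ring"
    and M :: "('r, 'm) module"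
    and N :: "('r, 'n) module"
    and I J :: "'r set"
  assumes "cring R"
    and "fin_gen_ideal R I"
    and "fin_gen_ideal R J"
    and "module R M"
    and "injective_wrt TYPE('r + (nat \<Rightarrow> 'm)) R N"
    and "IJ_prime R I J M"
  shows "IJ_coprime R I J (Hom_mod R M N)"
proof -
  note MM = assms(4) and inj = assms(5)
  interpret R: cring R by fact
  interpret M: module R M by fact
  have NN: "module R N" using inj unfolding injective_wrt_def by blast
  let ?H = "Hom_mod R M N"
  obtain S where S: "finite S" "S \<subseteq> carrier R" "I = genideal R S" and idI: "ideal I R"
    using assms(2) unfolding fin_gen_ideal_def by blast
  obtain T where T: "finite T" "T \<subseteq> carrier R" "J = genideal R T" and idJ: "ideal J R"
    using assms(3) unfolding fin_gen_ideal_def by blast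
  let ?IJ = "ideal_prod R I J"
  have IJsub: "?IJ \<subseteq> I \<inter> J" by (rule R.ideal_prod_inter[OF idI idJ])
  have IJR: "?IJ \<subseteq> carrier R" by (rule R.ideal_prod_in_carrier[OF idI idJ])
  have IR: "I \<subseteq> carrier R" using idI by (simp add: ideal.Icarr subsetI)
  have JR: "J \<subseteq> carrier R" using idJ by (simp add: ideal.Icarr subsetI)
  have SI: "S \<subseteq> I" using S R.genideal_self by blast
  have TJ: "T \<subseteq> J" using T R.genideal_self by blast
  have annS: "\<forall>a\<in>I. a \<odot>\<^bsub>M\<^esub> m = \<zero>\<^bsub>M\<^esub>" if m: "m \<in> carrier M" and h: "\<forall>s\<in>S. s \<odot>\<^bsub>M\<^esub> m = \<zero>\<^bsub>M\<^esub>" for m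
  proof -
    have "genideal R S \<subseteq> {r \<in> carrier R. r \<odot>\<^bsub>M\<^esub> m = \<zero>\<^bsub>M\<^esub>}"
      by (rule R.genideal_minimal[OF ann_ideal[OF MM m]]) (use S h in auto)
    then show ?thesis using S by auto
  qed
  have annT: "\<forall>a\<in>J. a \<odot>\<^bsub>M\<^esub> m = \<zero>\<^bsub>M\<^esub>" if m: "m \<in> carrier M" and h: "\<forall>s\<in>T. s \<odot>\<^bsub>M\<^esub> m = \<zero>\<^bsub>M\<^esub>" for m
  proof -
    have "genideal R T \<subseteq> {r \<in> carrier R. r \<odot>\<^bsub>M\<^esub> m = \<zero>\<^bsub>M\<^esub>}"
      by (rule R.genideal_minimal[OF ann_ideal[OF MM m]]) (use T h in auto)
    then show ?thesis using T by auto
  qed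
  have prodK: "\<forall>c\<in>?IJ. c \<odot>\<^bsub>M\<^esub> m = \<zero>\<^bsub>M\<^esub>"
    if m: "m \<in> carrier M" and h: "\<forall>s\<in>S. \<forall>t\<in>T. (s \<otimes>\<^bsub>R\<^esub> t) \<odot>\<^bsub>M\<^esub> m = \<zero>\<^bsub>M\<^esub>" for m
  proof -
    have A: "\<forall>a\<in>I. a \<odot>\<^bsub>M\<^esub> (t \<odot>\<^bsub>M\<^esub> m) = \<zero>\<^bsub>M\<^esub>" if t: "t \<in> T" for t
    proof (rule annS)
      show "t \<odot>\<^bsub>M\<^esub> m \<in> carrier M" using t T m by auto
      show "\<forall>s\<in>S. s \<odot>\<^bsub>M\<^esub> (t \<odot>\<^bsub>M\<^esub> m) = \<zero>\<^bsub>M\<^esub>"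
      proof
        fix s assume s: "s \<in> S"
        have "s \<odot>\<^bsub>M\<^esub> (t \<odot>\<^bsub>M\<^esub> m) = (s \<otimes>\<^bsub>R\<^esub> t) \<odot>\<^bsub>M\<^esub> m"
          using s t S T m by (simp add: M.smult_assoc1 subset_iff)
        then show "s \<odot>\<^bsub>M\<^esub> (t \<odot>\<^bsub>M\<^esub> m) = \<zero>\<^bsub>M\<^esub>" using h s t by simp
      qed
    qed
    have B: "\<forall>b\<in>J. b \<odot>\<^bsub>M\<^esub> (a \<odot>\<^bsub>M\<^esub> m) = \<zero>\<^bsub>M\<^esub>" if a: "a \<in> I" for a
    proof (rule annT)
      have aR: "a \<in> carrier R" using a IR by blast
      show "a \<odot>\<^bsub>M\<^esub> m \<in> carrier M" using aR m by auto
      show "\<forall>t\<in>T. t \<odot>\<^bsub>M\<^esub> (a \<odot>\<^bsub>M\<^esub> m) = \<zero>\<^bsub>M\<^esub>"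
      proof
        fix t assume t: "t \<in> T"
        have tR: "t \<in> carrier R" using t T by blast
        have "t \<odot>\<^bsub>M\<^esub> (a \<odot>\<^bsub>M\<^esub> m) = (t \<otimes>\<^bsub>R\<^esub> a) \<odot>\<^bsub>M\<^esub> m" using tR aR m by (simp add: M.smult_assoc1)
        also have "\<dots> = (a \<otimes>\<^bsub>R\<^esub> t) \<odot>\<^bsub>M\<^esub> m" using tR aR by (simp add: R.m_comm)
        also have "\<dots> = a \<odot>\<^bsub>M\<^esub> (t \<odot>\<^bsub>M\<^esub> m)" using tR aR m by (simp add: M.smult_assoc1)
        also have "\<dots> = \<zero>\<^bsub>M\<^esub>" using A[OF t] a by blast
        finally show "t \<odot>\<^bsub>M\<^esub> (a \<odot>\<^bsub>M\<^esub> m) = \<zero>\<^bsub>M\<^esub>" .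
      qed
    qed
    have "c \<odot>\<^bsub>M\<^esub> m = \<zero>\<^bsub>M\<^esub>" if c: "c \<in> ?IJ" for c
      using c
    proof (induction c rule: ideal_prod.induct)
      case (prod i j)
      have iR: "i \<in> carrier R" and jR: "j \<in> carrier R" using prod IR JR by auto
      have "(i \<otimes>\<^bsub>R\<^esub> j) \<odot>\<^bsub>M\<^esub> m = (j \<otimes>\<^bsub>R\<^esub> i) \<odot>\<^bsub>M\<^esub> m" using iR jR by (simp add: R.m_comm)
      also have "\<dots> = j \<odot>\<^bsub>M\<^esub> (i \<odot>\<^bsub>M\<^esub> m)" using iR jR m by (simp add: M.smult_assoc1)
      also have "\<dots> = \<zero>\<^bsub>M\<^esub>" using B prod by blast
      finally show ?case .
    next
      case (sum s1 s2)
      have "s1 \<in> carrier R" "s2 \<in> carrier R" using sum IJR by auto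
      then show ?case using sum m by (simp add: M.smult_l_distr)
    qed
    then show ?thesis by blast
  qed
  define KI where "KI = {m \<in> carrier M. \<forall>a\<in>I. a \<odot>\<^bsub>M\<^esub> m = \<zero>\<^bsub>M\<^esub>}"
  define KJ where "KJ = {m \<in> carrier M. \<forall>a\<in>J. a \<odot>\<^bsub>M\<^esub> m = \<zero>\<^bsub>M\<^esub>}"
  define KIJ where "KIJ = {m \<in> carrier M. \<forall>a\<in>?IJ. a \<odot>\<^bsub>M\<^esub> m = \<zero>\<^bsub>M\<^esub>}"
  have prime: "KIJ \<subseteq> KI \<union> KJ" using assms(6) unfolding IJ_prime_def KIJ_def KI_def KJ_def by blast
  have add_KIJ: "x \<oplus>\<^bsub>M\<^esub> y \<in> KIJ" if "x \<in> KIJ" "y \<in> KIJ" for x y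
    using that IJR by (auto simp: KIJ_def M.smult_r_distr)
  have cancel: "\<forall>a\<in>X. a \<odot>\<^bsub>M\<^esub> x = \<zero>\<^bsub>M\<^esub>"
    if XR: "X \<subseteq> carrier R" and x: "x \<in> carrier M" and y: "y \<in> carrier M"
      and hy: "\<forall>a\<in>X. a \<odot>\<^bsub>M\<^esub> y = \<zero>\<^bsub>M\<^esub>" and hxy: "\<forall>a\<in>X. a \<odot>\<^bsub>M\<^esub> (x \<oplus>\<^bsub>M\<^esub> y) = \<zero>\<^bsub>M\<^esub>" for X x y
  proof
    fix a assume a: "a \<in> X"
    have "a \<odot>\<^bsub>M\<^esub> x = a \<odot>\<^bsub>M\<^esub> (x \<oplus>\<^bsub>M\<^esub> y)" using a XR x y hy by (auto simp: M.smult_r_distr)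
    then show "a \<odot>\<^bsub>M\<^esub> x = \<zero>\<^bsub>M\<^esub>" using hxy a by simp
  qed
  have cases: "KIJ \<subseteq> KI \<or> KIJ \<subseteq> KJ"
  proof (rule ccontr)
    assume "\<not> ?thesis"
    then obtain x y where x: "x \<in> KIJ" "x \<notin> KI" and y: "y \<in> KIJ" "y \<notin> KJ" by blast
    have xJ: "x \<in> KJ" and yI: "y \<in> KI" using x y prime by blast+
    have xM: "x \<in> carrier M" and yM: "y \<in> carrier M" using x y by (auto simp: KIJ_def)
    have "x \<oplus>\<^bsub>M\<^esub> y \<in> KI \<union> KJ" using add_KIJ[OF x(1) y(1)] prime by blast
    then show False
    proof
      assume "x \<oplus>\<^bsub>M\<^esub> y \<in> KI"
      then have "\<forall>a\<in>I. a \<odot>\<^bsub>M\<^esub> x = \<zero>\<^bsub>M\<^esub>"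
        using cancel[OF IR xM yM] yI by (auto simp: KI_def)
      then show False using x xM by (auto simp: KI_def)
    next
      assume "x \<oplus>\<^bsub>M\<^esub> y \<in> KJ"
      then have "\<forall>a\<in>J. a \<odot>\<^bsub>M\<^esub> y = \<zero>\<^bsub>M\<^esub>"
        using cancel[OF JR yM xM] xJ xM yM by (auto simp: KJ_def M.a_comm)
      then show False using y yM by (auto simp: KJ_def)
    qed
  qed
  obtain n cs where P: "(\<lambda>(s, t). s \<otimes>\<^bsub>R\<^esub> t) ` (S \<times> T) = cs ` {i. i < (n::nat)}"
    using finite_imp_nat_seg_image_inj_on[of "(\<lambda>(s, t). s \<otimes>\<^bsub>R\<^esub> t) ` (S \<times> T)"] S(1) T(1) by auto
  have csIJ: "\<forall>i<n. cs i \<in> ?IJ"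
  proof (intro allI impI)
    fix i assume "i < n"
    then have "cs i \<in> (\<lambda>(s, t). s \<otimes>\<^bsub>R\<^esub> t) ` (S \<times> T)" using P by auto
    then obtain s t where "s \<in> S" "t \<in> T" "cs i = s \<otimes>\<^bsub>R\<^esub> t" by auto
    then show "cs i \<in> ?IJ" using SI TJ ideal_prod.prod[of s I t J R] by auto
  qed
  have csK: "m \<in> KIJ" if m: "m \<in> carrier M" and h: "\<forall>i<n. cs i \<odot>\<^bsub>M\<^esub> m = \<zero>\<^bsub>M\<^esub>" for m
  proof -
    have "\<forall>s\<in>S. \<forall>t\<in>T. (s \<otimes>\<^bsub>R\<^esub> t) \<odot>\<^bsub>M\<^esub> m = \<zero>\<^bsub>M\<^esub>"
    proof (intro ballI)
      fix s t assume "s \<in> S" "t \<in> T"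
      then have "s \<otimes>\<^bsub>R\<^esub> t \<in> cs ` {i. i < n}" using P[symmetric] by auto
      then show "(s \<otimes>\<^bsub>R\<^esub> t) \<odot>\<^bsub>M\<^esub> m = \<zero>\<^bsub>M\<^esub>" using h by auto
    qed
    then show ?thesis using prodK[OF m] m by (simp add: KIJ_def)
  qed
  have eq: "ideal_smult R ?IJ ?H = ideal_smult R X ?H"
    if X1: "?IJ \<subseteq> X" and X2: "X \<subseteq> carrier R" and X3: "KIJ \<subseteq> {m \<in> carrier M. \<forall>a\<in>X. a \<odot>\<^bsub>M\<^esub> m = \<zero>\<^bsub>M\<^esub>}" for X
  proof
    show "ideal_smult R ?IJ ?H \<subseteq> ideal_smult R X ?H" by (rule ideal_smult_mono[OF X1])
    show "ideal_smult R X ?H \<subseteq> ideal_smult R ?IJ ?H"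
    proof
      fix f assume f: "f \<in> ideal_smult R X ?H"
      have fH: "f \<in> carrier ?H" and fv: "\<forall>m\<in>carrier M. (\<forall>a\<in>X. a \<odot>\<^bsub>M\<^esub> m = \<zero>\<^bsub>M\<^esub>) \<longrightarrow> f m = \<zero>\<^bsub>N\<^esub>"
        using ideal_smult_upper[OF MM NN X2 f] by blast+
      show "f \<in> ideal_smult R ?IJ ?H"
      proof (rule key_lemma[OF MM inj csIJ IJR fH])
        show "\<forall>m\<in>carrier M. (\<forall>i<n. cs i \<odot>\<^bsub>M\<^esub> m = \<zero>\<^bsub>M\<^esub>) \<longrightarrow> f m = \<zero>\<^bsub>N\<^esub>"
          using csK X3 fv by blast
      qed
    qed
  qed
  from cases show ?thesis
  proof
    assume "KIJ \<subseteq> KI"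
    then show ?thesis unfolding IJ_coprime_def using eq[of I] IJsub IR by (auto simp: KI_def)
  next
    assume "KIJ \<subseteq> KJ"
    then show ?thesis unfolding IJ_coprime_def using eq[of J] IJsub JR by (auto simp: KJ_def)
  qed
qed

end
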